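(* Let $X\in\mathbb{R}^{n\times p}$ be deterministic, $\beta^*\in\mathbb{R}^p$, $\sigma^*>0$, and $y=X\beta^*+\varepsilon$ with $\varepsilon\in\mathbb{R}^n$ having i.i.d. $\mathcal N(0,{\sigma^*}^2)$ entries. Let $\mathcal S^*=\{j:\beta^*_j\ne0\}$. Assume $\Psi=\frac1nX^\top X$ satisfies $\Psi_{jj}=1$ and $\max_{j'\ne j}|\Psi_{jj'}|\le\frac{1}{7\alpha s}$ for all $j\in[p]$, for some integer $s\ge1$ with $|\mathcal S^*|\le s$ and some $\alpha>1$. Let $A>0$, $\lambda=A\sqrt{2\log p/n}$, let $\eta>0$ satisfy $\lambda\|\beta^*\|_1\le\eta\sigma^*$, and let $C=2\big(1+\frac{16}{7(\alpha-1)}\big)$. Let $\hat\beta$ be a minimizer over $\beta\in\mathbb{R}^p$ of $\frac{1}{\sqrt n}\|y-X\beta\|_2+\lambda\|\beta\|_1$ (the square-root Lasso). Then with probability at least $1-p^{1-A^2/8}-(1+e^2)e^{-n/24}$ the following holds: $\|\hat\beta-\beta^*\|_\infty\le C(2+\eta)\lambda\sigma^*$, and moreover, if $\min_{j\in\mathcal S^*}|\beta^*_j|>2C(2+\eta)\lambda\sigma^*$, then $\hat{\mathcal S}=\{j\in[p]:|\hat\beta_j|>C(2+\eta)\lambda\sigma^*\}$ equals $\mathcal S^*$. *)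

theory Defs
  imports "HOL-Probability.Probability"
begin

text \<open>Vectors in R^n / R^p are functions on nat, only indices below n resp. p matter.
  A design matrix X in R^(n x p) is a function nat => nat => real (row i, column j).\<close>

definition gram :: "nat \<Rightarrow> (nat \<Rightarrow> nat \<Rightarrow> real) \<Rightarrow> nat \<Rightarrow> nat \<Rightarrow> real" where
  "gram n X j k = (1 / real n) * (\<Sum>i<n. X i j * X i k)"

definition support :: "nat \<Rightarrow> (nat \<Rightarrow> real) \<Rightarrow> nat set" where
  "support p b = {j. j < p \<and> b j \<noteq> 0}"

definition l1norm :: "nat \<Rightarrow> (nat \<Rightarrow> real) \<Rightarrow> real" where
  "l1norm p b = (\<Sum>j<p. \<bar>b j\<bar>)"

definition linfnorm :: "nat \<Rightarrow> (nat \<Rightarrow> real) \<Rightarrow> real" where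
  "linfnorm p b = Max (insert 0 ((\<lambda>j. \<bar>b j\<bar>) ` {..<p}))"

definition response :: "nat \<Rightarrow> nat \<Rightarrow> (nat \<Rightarrow> nat \<Rightarrow> real) \<Rightarrow> (nat \<Rightarrow> real) \<Rightarrow> (nat \<Rightarrow> real) \<Rightarrow> nat \<Rightarrow> real" where
  "response n p X b eps i = (\<Sum>j<p. X i j * b j) + eps i"

definition sqrt_lasso_obj :: "nat \<Rightarrow> nat \<Rightarrow> (nat \<Rightarrow> nat \<Rightarrow> real) \<Rightarrow> (nat \<Rightarrow> real) \<Rightarrow> real \<Rightarrow> (nat \<Rightarrow> real) \<Rightarrow> real" where
  "sqrt_lasso_obj n p X y lam b =
     (1 / sqrt (real n)) * sqrt (\<Sum>i<n. (y i - (\<Sum>j<p. X i j * b j))\<^sup>2) + lam * l1norm p b"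

definition is_sqrt_lasso_min :: "nat \<Rightarrow> nat \<Rightarrow> (nat \<Rightarrow> nat \<Rightarrow> real) \<Rightarrow> (nat \<Rightarrow> real) \<Rightarrow> real \<Rightarrow> (nat \<Rightarrow> real) \<Rightarrow> bool" where
  "is_sqrt_lasso_min n p X y lam bh \<longleftrightarrow>
     (\<forall>b. sqrt_lasso_obj n p X y lam bh \<le> sqrt_lasso_obj n p X y lam b)"

text \<open>Noise distribution: n i.i.d. N(0, sigma^2) coordinates (sigma = standard deviation).\<close>
definition noise_measure :: "nat \<Rightarrow> real \<Rightarrow> (nat \<Rightarrow> real) measure" where
  "noise_measure n \<sigma> = PiM {..<n} (\<lambda>_. density lborel (normal_density 0 \<sigma>))"

end

theory Submission
  imports Defs
begin




lemma nn_integral_normal_density_1: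
  assumes "s > 0" shows "(\<integral>\<^sup>+x. ennreal (normal_density \<mu> s x) \<partial>lborel) = 1"
  by (subst nn_integral_eq_integral) (auto simp: normal_density_nonneg assms)

lemma gauss_mgf:
  fixes \<sigma> u v :: real
  assumes sp: "\<sigma> > 0" and vq: "2 * v * \<sigma>\<^sup>2 < 1"
  shows "(\<integral>\<^sup>+x. ennreal (exp (u * x + v * x\<^sup>2)) \<partial>density lborel (normal_density 0 \<sigma>))
     = ennreal (exp (u\<^sup>2 * \<sigma>\<^sup>2 / (2 * (1 - 2 * v * \<sigma>\<^sup>2))) / sqrt (1 - 2 * v * \<sigma>\<^sup>2))"
proof -
  define q where "q = 1 - 2 * v * \<sigma>\<^sup>2"
  have q: "q > 0" using vq by (simp add: q_def)
  define s where "s = \<sigma> / sqrt q"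
  have s: "s > 0" using sp q by (simp add: s_def)
  have s2: "s\<^sup>2 = \<sigma>\<^sup>2 / q" using q by (simp add: s_def power_divide)
  define m where "m = u * s\<^sup>2"
  define K where "K = exp (u\<^sup>2 * \<sigma>\<^sup>2 / (2 * q)) / sqrt q"
  have pt: "normal_density 0 \<sigma> x * exp (u * x + v * x\<^sup>2) = K * normal_density m s x" for x
  proof -
    have e: "-(x - 0)\<^sup>2 / (2 * \<sigma>\<^sup>2) + (u * x + v * x\<^sup>2) = u\<^sup>2 * \<sigma>\<^sup>2 / (2 * q) + (-(x - m)\<^sup>2 / (2 * s\<^sup>2))"
    proof -
      have v: "v = (1 - q) / (2 * \<sigma>\<^sup>2)" using sp unfolding q_def by (simp add: field_simps)
      have m: "m = u * \<sigma>\<^sup>2 / q" unfolding m_def s2 by simp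
      show ?thesis unfolding v m s2 using sp q by (simp add: field_simps power2_eq_square)
    qed
    have r: "1 / sqrt (2 * pi * \<sigma>\<^sup>2) = (1 / sqrt q) * (1 / sqrt (2 * pi * s\<^sup>2))"
      using sp q by (simp add: s2 real_sqrt_divide real_sqrt_mult)
    have ee: "exp (-(x - 0)\<^sup>2 / (2 * \<sigma>\<^sup>2)) * exp (u * x + v * x\<^sup>2)
        = exp (u\<^sup>2 * \<sigma>\<^sup>2 / (2 * q)) * exp (-(x - m)\<^sup>2 / (2 * s\<^sup>2))"
      by (simp only: exp_add[symmetric] e)
    have "normal_density 0 \<sigma> x * exp (u * x + v * x\<^sup>2) = (1 / sqrt (2 * pi * \<sigma>\<^sup>2)) *
        (exp (-(x - 0)\<^sup>2 / (2 * \<sigma>\<^sup>2)) * exp (u * x + v * x\<^sup>2))"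
      unfolding normal_density_def by (simp only: mult.assoc)
    also have "\<dots> = K * normal_density m s x"
      unfolding ee r normal_density_def K_def by (simp add: mult_ac)
    finally show ?thesis .
  qed
  have "(\<integral>\<^sup>+x. ennreal (exp (u * x + v * x\<^sup>2)) \<partial>density lborel (normal_density 0 \<sigma>))
      = (\<integral>\<^sup>+x. ennreal (normal_density 0 \<sigma> x) * ennreal (exp (u * x + v * x\<^sup>2)) \<partial>lborel)"
    by (subst nn_integral_density) auto
  also have "\<dots> = (\<integral>\<^sup>+x. ennreal K * ennreal (normal_density m s x) \<partial>lborel)"
    using pt by (intro nn_integral_cong) (metis ennreal_mult'' normal_density_nonneg exp_ge_zero)
  also have "\<dots> = ennreal K"
    by (subst nn_integral_cmult) (auto simp: nn_integral_normal_density_1 s)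
  finally show ?thesis unfolding K_def q_def .
qed


lemma noise_prob_space: "\<sigma> > 0 \<Longrightarrow> prob_space (noise_measure n \<sigma>)"
  unfolding noise_measure_def by (intro prob_space_PiM prob_space_normal_density) auto

lemma noise_product_sigma_finite:
  assumes "\<sigma> > 0" shows "product_sigma_finite (\<lambda>_::nat. density lborel (normal_density 0 \<sigma>))"
proof -
  interpret product_prob_space "\<lambda>_::nat. density lborel (normal_density 0 \<sigma>)" "{..<n}"
    by (intro product_prob_spaceI prob_space_normal_density) (auto simp: assms)
  show ?thesis by unfold_locales
qed

definition gK :: "real \<Rightarrow> real \<Rightarrow> real \<Rightarrow> real" where
  "gK \<sigma> a b = exp (a\<^sup>2 * \<sigma>\<^sup>2 / (2 * (1 - 2 * b * \<sigma>\<^sup>2))) / sqrt (1 - 2 * b * \<sigma>\<^sup>2)"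

lemma gK_nonneg: "2 * b * \<sigma>\<^sup>2 < 1 \<Longrightarrow> 0 \<le> gK \<sigma> a b"
  unfolding gK_def by simp

lemma noise_mgf:
  fixes u v :: "nat \<Rightarrow> real"
  assumes sp: "\<sigma> > 0" and vq: "\<And>i. i < n \<Longrightarrow> 2 * v i * \<sigma>\<^sup>2 < 1"
  shows "(\<integral>\<^sup>+e. ennreal (exp (\<Sum>i<n. u i * e i + v i * (e i)\<^sup>2)) \<partial>noise_measure n \<sigma>)
     = ennreal (\<Prod>i<n. gK \<sigma> (u i) (v i))"
proof -
  interpret product_sigma_finite "\<lambda>_::nat. density lborel (normal_density 0 \<sigma>)"
    by (rule noise_product_sigma_finite) (rule sp)
  have "(\<integral>\<^sup>+e. ennreal (exp (\<Sum>i<n. u i * e i + v i * (e i)\<^sup>2)) \<partial>noise_measure n \<sigma>)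
     = (\<integral>\<^sup>+e. (\<Prod>i\<in>{..<n}. (\<lambda>i x. ennreal (exp (u i * x + v i * x\<^sup>2))) i (e i)) \<partial>noise_measure n \<sigma>)"
    by (intro nn_integral_cong) (simp add: exp_sum prod_ennreal)
  also have "\<dots> = (\<Prod>i\<in>{..<n}. \<integral>\<^sup>+x. ennreal (exp (u i * x + v i * x\<^sup>2)) \<partial>density lborel (normal_density 0 \<sigma>))"
    unfolding noise_measure_def by (rule product_nn_integral_prod) auto
  also have "\<dots> = (\<Prod>i\<in>{..<n}. ennreal (gK \<sigma> (u i) (v i)))"
    by (intro prod.cong refl) (simp add: gauss_mgf sp vq gK_def)
  also have "\<dots> = ennreal (\<Prod>i<n. gK \<sigma> (u i) (v i))"
    by (rule prod_ennreal) (auto intro: gK_nonneg vq)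
  finally show ?thesis .
qed

lemma noise_chernoff:
  fixes u v :: "nat \<Rightarrow> real" and c t :: real
  assumes sp: "\<sigma> > 0" and t: "t > 0" and vq: "\<And>i. i < n \<Longrightarrow> 2 * (t * v i) * \<sigma>\<^sup>2 < 1"
  shows "measure (noise_measure n \<sigma>) {e \<in> space (noise_measure n \<sigma>). c \<le> (\<Sum>i<n. u i * e i + v i * (e i)\<^sup>2)}
     \<le> exp (- t * c) * (\<Prod>i<n. gK \<sigma> (t * u i) (t * v i))"
proof -
  let ?M = "noise_measure n \<sigma>"
  interpret prob_space ?M by (rule noise_prob_space) (rule sp)
  let ?f = "\<lambda>e. (\<Sum>i<n. u i * e i + v i * (e i)\<^sup>2)"
  have meas: "?f \<in> borel_measurable ?M" unfolding noise_measure_def by measurable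
  have "emeasure ?M {e \<in> space ?M. ?f e \<ge> c} \<le>
           ennreal (exp (-t * c)) * nn_integral ?M (\<lambda>x. ennreal (exp (t * ?f x)) * indicator (space ?M) x)"
    by (rule Chernoff_ineq_nn_integral_ge) (use t meas in auto)
  also have "nn_integral ?M (\<lambda>x. ennreal (exp (t * ?f x)) * indicator (space ?M) x)
      = (\<integral>\<^sup>+e. ennreal (exp (\<Sum>i<n. (t * u i) * e i + (t * v i) * (e i)\<^sup>2)) \<partial>?M)"
    by (intro nn_integral_cong) (simp add: sum_distrib_left algebra_simps)
  also have "\<dots> = ennreal (\<Prod>i<n. gK \<sigma> (t * u i) (t * v i))"
    by (rule noise_mgf) (use sp vq in auto)
  finally have "ennreal (measure ?M {e \<in> space ?M. c \<le> ?f e}) \<le> ennreal (exp (- t * c)) * ennreal (\<Prod>i<n. gK \<sigma> (t * u i) (t * v i))"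
    by (simp add: emeasure_eq_measure)
  also have "\<dots> = ennreal (exp (- t * c) * (\<Prod>i<n. gK \<sigma> (t * u i) (t * v i)))"
    by (rule ennreal_mult''[symmetric], rule prod_nonneg, rule gK_nonneg, rule vq, simp)
  finally show ?thesis
  proof (subst (asm) ennreal_le_iff)
    have "0 \<le> (\<Prod>i<n. gK \<sigma> (t * u i) (t * v i))"
      by (rule prod_nonneg, rule gK_nonneg, rule vq, simp)
    then show "0 \<le> exp (- t * c) * (\<Prod>i<n. gK \<sigma> (t * u i) (t * v i))" by simp
  qed
qed

lemma tail_lin:
  fixes w :: "nat \<Rightarrow> real"
  assumes sp: "\<sigma> > 0" and np: "n > 0" and w: "(\<Sum>i<n. (w i)\<^sup>2) = real n" and x: "x > 0"
  shows "measure (noise_measure n \<sigma>) {e \<in> space (noise_measure n \<sigma>). x \<le> (\<Sum>i<n. w i * e i)}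
     \<le> exp (- x\<^sup>2 / (2 * real n * \<sigma>\<^sup>2))"
proof -
  define t where "t = x / (real n * \<sigma>\<^sup>2)"
  have t: "t > 0" using x sp np by (simp add: t_def)
  have "measure (noise_measure n \<sigma>) {e \<in> space (noise_measure n \<sigma>). x \<le> (\<Sum>i<n. w i * e i + 0 * (e i)\<^sup>2)}
     \<le> exp (- t * x) * (\<Prod>i<n. gK \<sigma> (t * w i) (t * 0))"
    by (rule noise_chernoff) (use sp t in auto)
  also have "(\<Prod>i<n. gK \<sigma> (t * w i) (t * 0)) = (\<Prod>i<n. exp (t\<^sup>2 * \<sigma>\<^sup>2 / 2 * (w i)\<^sup>2))"
    by (intro prod.cong refl) (simp add: gK_def power_mult_distrib mult_ac)
  also have "\<dots> = exp (\<Sum>i<n. t\<^sup>2 * \<sigma>\<^sup>2 / 2 * (w i)\<^sup>2)"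
    by (simp add: exp_sum)
  also have "\<dots> = exp (t\<^sup>2 * \<sigma>\<^sup>2 / 2 * real n)"
    by (simp only: sum_distrib_left[symmetric] w)
  also have "exp (- t * x) * exp (t\<^sup>2 * \<sigma>\<^sup>2 / 2 * real n) = exp (- x\<^sup>2 / (2 * real n * \<sigma>\<^sup>2))"
    unfolding exp_add[symmetric] using sp np by (simp add: t_def field_simps power2_eq_square)
  finally show ?thesis by simp
qed

lemma tail_low:
  fixes a :: real
  assumes sp: "\<sigma> > 0"
  shows "measure (noise_measure n \<sigma>) {e \<in> space (noise_measure n \<sigma>). (\<Sum>i<n. (e i)\<^sup>2) \<le> a * real n * \<sigma>\<^sup>2}
     \<le> exp (a * real n / 2) * (1 / sqrt 2) ^ n"
proof -
  define t where "t = 1 / (2 * \<sigma>\<^sup>2)"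
  have t: "t > 0" using sp by (simp add: t_def)
  have "{e \<in> space (noise_measure n \<sigma>). (\<Sum>i<n. (e i)\<^sup>2) \<le> a * real n * \<sigma>\<^sup>2}
     = {e \<in> space (noise_measure n \<sigma>). - a * real n * \<sigma>\<^sup>2 \<le> (\<Sum>i<n. 0 * e i + (-1) * (e i)\<^sup>2)}"
    by (auto simp: sum_negf)
  also have "measure (noise_measure n \<sigma>) \<dots>
     \<le> exp (- t * (- a * real n * \<sigma>\<^sup>2)) * (\<Prod>i<n. gK \<sigma> (t * 0) (t * (-1)))"
    by (rule noise_chernoff) (use sp t in \<open>auto simp: t_def\<close>)
  also have "(\<Prod>i<n. gK \<sigma> (t * 0) (t * (-1))) = (1 / sqrt 2) ^ n"
    using sp by (simp add: gK_def t_def)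
  also have "exp (- t * (- a * real n * \<sigma>\<^sup>2)) = exp (a * real n / 2)"
    using sp by (simp add: t_def)
  finally show ?thesis .
qed

lemma tail_up:
  fixes b :: real
  assumes sp: "\<sigma> > 0"
  shows "measure (noise_measure n \<sigma>) {e \<in> space (noise_measure n \<sigma>). b * real n * \<sigma>\<^sup>2 \<le> (\<Sum>i<n. (e i)\<^sup>2)}
     \<le> exp (- b * real n / 4) * (sqrt 2) ^ n"
proof -
  define t where "t = 1 / (4 * \<sigma>\<^sup>2)"
  have t: "t > 0" using sp by (simp add: t_def)
  have "{e \<in> space (noise_measure n \<sigma>). b * real n * \<sigma>\<^sup>2 \<le> (\<Sum>i<n. (e i)\<^sup>2)}
     = {e \<in> space (noise_measure n \<sigma>). b * real n * \<sigma>\<^sup>2 \<le> (\<Sum>i<n. 0 * e i + 1 * (e i)\<^sup>2)}"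
    by auto
  also have "measure (noise_measure n \<sigma>) \<dots>
     \<le> exp (- t * (b * real n * \<sigma>\<^sup>2)) * (\<Prod>i<n. gK \<sigma> (t * 0) (t * 1))"
    by (rule noise_chernoff) (use sp t in \<open>auto simp: t_def\<close>)
  also have "(\<Prod>i<n. gK \<sigma> (t * 0) (t * 1)) = (sqrt 2) ^ n"
    using sp by (simp add: gK_def t_def real_sqrt_divide)
  also have "exp (- t * (b * real n * \<sigma>\<^sup>2)) = exp (- b * real n / 4)"
    using sp by (simp add: t_def)
  finally show ?thesis .
qed


lemma kkt_abstract:
  fixes R g L c :: real
  assumes R: "R \<ge> 0" and L: "L > 0" and c: "c > 0" and R0: "R = 0 \<Longrightarrow> g = 0"
    and H: "\<And>\<tau>. R \<le> sqrt (R\<^sup>2 - 2 * \<tau> * g + \<tau>\<^sup>2 * c) + L * \<bar>\<tau>\<bar>"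
  shows "g \<le> L * R"
proof (rule ccontr)
  assume "\<not> g \<le> L * R"
  then have gg: "g - L * R > 0" by simp
  show False
  proof (cases "R = 0")
    case True then show False using R0 gg by simp
  next
    case False
    then have Rp: "R > 0" using R by simp
    define \<tau> where "\<tau> = min (R / L) ((g - L * R) / c)"
    have tp: "\<tau> > 0" using Rp L c gg by (simp add: \<tau>_def)
    have t1: "L * \<tau> \<le> R" using L unfolding \<tau>_def by (simp add: min_def field_simps)
    have t2: "\<tau> * c \<le> g - L * R" using c unfolding \<tau>_def by (simp add: min_def field_simps)
    define Q where "Q = R\<^sup>2 - 2 * \<tau> * g + \<tau>\<^sup>2 * c"
    have "R - L * \<tau> \<le> sqrt Q" using H[of \<tau>] tp unfolding Q_def by simp
    moreover have "0 \<le> R - L * \<tau>" using t1 by simp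
    ultimately have "(R - L * \<tau>)\<^sup>2 \<le> Q"
      by (metis abs_of_nonneg order_trans power2_le_iff_abs_le real_sqrt_ge_zero real_sqrt_le_iff real_sqrt_pow2_iff
          sqrt_ge_absD sqrt_le_D)
    then have "2 * \<tau> * (g - L * R) \<le> \<tau>\<^sup>2 * (c - L\<^sup>2)"
      unfolding Q_def by (simp add: power2_eq_square algebra_simps)
    also have "\<dots> \<le> \<tau>\<^sup>2 * c" using L by (simp add: mult_left_mono)
    finally have "2 * \<tau> * (g - L * R) \<le> \<tau> * (\<tau> * c)" by (simp add: power2_eq_square)
    then have "2 * (g - L * R) \<le> \<tau> * c" using tp by simp
    then show False using t2 gg by simp
  qed
qed

lemma cs_sum:
  fixes a b :: "nat \<Rightarrow> real"
  shows "(\<Sum>i\<in>I. a i * b i) \<le> sqrt (\<Sum>i\<in>I. (a i)\<^sup>2) * sqrt (\<Sum>i\<in>I. (b i)\<^sup>2)"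
proof -
  have "(\<Sum>i\<in>I. a i * b i) \<le> sqrt ((\<Sum>i\<in>I. a i * b i)\<^sup>2)" by simp
  also have "\<dots> \<le> sqrt ((\<Sum>i\<in>I. (a i)\<^sup>2) * (\<Sum>i\<in>I. (b i)\<^sup>2))"
    by (rule real_sqrt_le_mono, rule Cauchy_Schwarz_ineq_sum)
  finally show ?thesis by (simp add: real_sqrt_mult)
qed


lemma deterministic:
  fixes n p s :: nat and X :: "nat \<Rightarrow> nat \<Rightarrow> real" and \<beta>s \<beta>h eps :: "nat \<Rightarrow> real"
    and \<sigma> \<alpha> \<eta> lam :: real
  assumes np: "n > 0" and sp: "\<sigma> > 0" and lp: "lam > 0"
    and diag: "\<forall>j<p. gram n X j j = 1"
    and offdiag: "\<forall>j<p. \<forall>k<p. k \<noteq> j \<longrightarrow> \<bar>gram n X j k\<bar> \<le> 1 / (7 * \<alpha> * real s)"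
    and s_ge: "s \<ge> 1" and supp: "card (support p \<beta>s) \<le> s" and alpha_gt: "\<alpha> > 1"
    and eta_pos: "\<eta> > 0"
    and eb: "lam * l1norm p \<beta>s \<le> \<eta> * \<sigma>"
    and G: "\<forall>j<p. \<bar>\<Sum>i<n. X i j * eps i\<bar> \<le> lam * real n * \<sigma> / 2"
    and lo: "49 / 100 * real n * \<sigma>\<^sup>2 \<le> (\<Sum>i<n. (eps i)\<^sup>2)"
    and up: "(\<Sum>i<n. (eps i)\<^sup>2) \<le> 5 * real n * \<sigma>\<^sup>2"
    and mn: "is_sqrt_lasso_min n p X (response n p X \<beta>s eps) lam \<beta>h"
  shows "\<forall>j<p. \<bar>\<beta>h j - \<beta>s j\<bar> \<le> 2 * (1 + 16 / (7 * (\<alpha> - 1))) * (2 + \<eta>) * lam * \<sigma>"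
proof -
  define y where "y = response n p X \<beta>s eps"
  define D where "D = (\<lambda>j. \<beta>h j - \<beta>s j)"
  define XD where "XD = (\<lambda>i. \<Sum>j<p. X i j * D j)"
  define r where "r = (\<lambda>i. eps i - XD i)"
  define nr where "nr = sqrt (\<Sum>i<n. (r i)\<^sup>2)"
  define ne where "ne = sqrt (\<Sum>i<n. (eps i)\<^sup>2)"
  define sq where "sq = sqrt (real n)"
  have sqp: "sq > 0" using np by (simp add: sq_def)
  have sq2: "sq * sq = real n" using np by (simp add: sq_def)
  have sqsq: "sq\<^sup>2 = real n" using np by (simp add: sq_def)
  have res: "y i - (\<Sum>j<p. X i j * b j) = eps i - (\<Sum>j<p. X i j * (b j - \<beta>s j))" for i b
    by (simp add: y_def response_def sum_subtractf algebra_simps)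
  have objh: "sqrt_lasso_obj n p X y lam \<beta>h = nr / sq + lam * l1norm p \<beta>h"
    unfolding sqrt_lasso_obj_def res nr_def r_def XD_def D_def sq_def by simp
  have objs: "sqrt_lasso_obj n p X y lam \<beta>s = ne / sq + lam * l1norm p \<beta>s"
    unfolding sqrt_lasso_obj_def res ne_def sq_def by simp
  have basic: "nr / sq + lam * l1norm p \<beta>h \<le> ne / sq + lam * l1norm p \<beta>s"
    using mn objh objs unfolding is_sqrt_lasso_min_def y_def by metis
  have nrp: "nr \<ge> 0" and nep: "ne \<ge> 0" by (simp_all add: nr_def ne_def sum_nonneg)
  have ne2: "ne\<^sup>2 = (\<Sum>i<n. (eps i)\<^sup>2)" by (simp add: ne_def sum_nonneg)
  have nr2: "nr\<^sup>2 = (\<Sum>i<n. (r i)\<^sup>2)" by (simp add: nr_def sum_nonneg)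
  have nelo: "ne \<ge> 7 / 10 * sq * \<sigma>"
  proof -
    have "(7 / 10 * sq * \<sigma>)\<^sup>2 = 49 / 100 * real n * \<sigma>\<^sup>2" unfolding power_mult_distrib sqsq by (simp add: power2_eq_square)
    then have "(7 / 10 * sq * \<sigma>)\<^sup>2 \<le> ne\<^sup>2" using lo unfolding ne2 by simp
    then show ?thesis using nep by (meson power2_le_imp_le)
  qed
  have neup: "ne \<le> 3 * sq * \<sigma>"
  proof -
    have "(3 * sq * \<sigma>)\<^sup>2 = 9 * real n * \<sigma>\<^sup>2" unfolding power_mult_distrib sqsq by (simp add: power2_eq_square)
    then have "ne\<^sup>2 \<le> (3 * sq * \<sigma>)\<^sup>2"
    proof -
      have "0 \<le> real n * \<sigma>\<^sup>2" by simp
      then show ?thesis using up \<open>(3 * sq * \<sigma>)\<^sup>2 = 9 * real n * \<sigma>\<^sup>2\<close> unfolding ne2 by linarith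
    qed
    then show ?thesis using sqp sp by (simp add: power2_le_iff_abs_le)
  qed
  define L1D where "L1D = l1norm p D"
  have L1Dp: "L1D \<ge> 0" by (simp add: L1D_def l1norm_def sum_nonneg)
  have XDsum: "(\<Sum>i<n. eps i * XD i) = (\<Sum>j<p. D j * (\<Sum>i<n. X i j * eps i))"
    unfolding XD_def by (simp add: sum_distrib_left sum.swap[of _ "{..<n}"] mult_ac)
  have inner: "(\<Sum>i<n. eps i * XD i) \<le> lam * real n * \<sigma> / 2 * L1D"
  proof -
    have "(\<Sum>j<p. D j * (\<Sum>i<n. X i j * eps i)) \<le> (\<Sum>j<p. \<bar>D j\<bar> * (lam * real n * \<sigma> / 2))"
    proof (rule sum_mono)
      fix j assume "j \<in> {..<p}"
      then have "\<bar>\<Sum>i<n. X i j * eps i\<bar> \<le> lam * real n * \<sigma> / 2" using G by simp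
      then have "\<bar>D j\<bar> * \<bar>\<Sum>i<n. X i j * eps i\<bar> \<le> \<bar>D j\<bar> * (lam * real n * \<sigma> / 2)"
        by (rule mult_left_mono) simp
      then show "D j * (\<Sum>i<n. X i j * eps i) \<le> \<bar>D j\<bar> * (lam * real n * \<sigma> / 2)"
        using abs_ge_self[of "D j * (\<Sum>i<n. X i j * eps i)"] unfolding abs_mult by linarith
    qed
    moreover have "(\<Sum>j<p. \<bar>D j\<bar> * (lam * real n * \<sigma> / 2)) = lam * real n * \<sigma> / 2 * L1D"
      by (simp add: L1D_def l1norm_def sum_distrib_left mult.commute)
    ultimately show ?thesis unfolding XDsum by linarith
  qed
  have er: "(\<Sum>i<n. eps i * r i) = ne\<^sup>2 - (\<Sum>i<n. eps i * XD i)"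
    unfolding ne2 r_def by (simp add: algebra_simps sum_subtractf power2_eq_square)
  have cs: "(\<Sum>i<n. eps i * r i) \<le> ne * nr" unfolding ne_def nr_def by (rule cs_sum)
  have A: "ne\<^sup>2 - lam * real n * \<sigma> / 2 * L1D \<le> ne * nr" using er cs inner by linarith
  have B: "nr \<le> ne + sq * lam * (l1norm p \<beta>s - l1norm p \<beta>h)"
  proof -
    have h: "nr / sq \<le> ne / sq + lam * (l1norm p \<beta>s - l1norm p \<beta>h)" using basic by (simp add: algebra_simps)
    have "sq * (nr / sq) \<le> sq * (ne / sq + lam * (l1norm p \<beta>s - l1norm p \<beta>h))"
      by (rule mult_left_mono[OF h]) (use sqp in simp)
    then show ?thesis using sqp by (simp add: algebra_simps)
  qed
  have C: "ne * sq * lam * (l1norm p \<beta>h - l1norm p \<beta>s) \<le> lam * real n * \<sigma> / 2 * L1D"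
  proof -
    have "ne * nr \<le> ne * (ne + sq * lam * (l1norm p \<beta>s - l1norm p \<beta>h))"
      using B nep by (rule mult_left_mono)
    then show ?thesis using A by (simp add: algebra_simps power2_eq_square)
  qed
  have cone0: "l1norm p \<beta>h - l1norm p \<beta>s \<le> 5 / 7 * L1D"
  proof (cases "l1norm p \<beta>h - l1norm p \<beta>s \<le> 0")
    case True then show ?thesis using L1Dp by simp
  next
    case False
    then have dpos: "l1norm p \<beta>h - l1norm p \<beta>s > 0" by simp
    have "7 / 10 * real n * \<sigma> \<le> ne * sq"
    proof -
      have "7 / 10 * sq * \<sigma> * sq \<le> ne * sq" by (rule mult_right_mono[OF nelo]) (use sqp in simp)
      moreover have "7 / 10 * sq * \<sigma> * sq = 7 / 10 * real n * \<sigma>" unfolding sq2[symmetric] by (simp only: mult_ac)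
      ultimately show ?thesis by linarith
    qed
    then have "7 / 10 * real n * \<sigma> * (lam * (l1norm p \<beta>h - l1norm p \<beta>s)) \<le> ne * sq * (lam * (l1norm p \<beta>h - l1norm p \<beta>s))"
      by (rule mult_right_mono) (use lp dpos in simp)
    moreover have "7 / 10 * real n * \<sigma> * (lam * (l1norm p \<beta>h - l1norm p \<beta>s)) = (real n * \<sigma> * lam) * (7 / 10 * (l1norm p \<beta>h - l1norm p \<beta>s))"
      by (simp add: field_simps)
    moreover have "ne * sq * (lam * (l1norm p \<beta>h - l1norm p \<beta>s)) = ne * sq * lam * (l1norm p \<beta>h - l1norm p \<beta>s)"
      by (simp add: field_simps)
    moreover have "lam * real n * \<sigma> / 2 * L1D = (real n * \<sigma> * lam) * (L1D / 2)"
      by (simp add: field_simps)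
    ultimately have "(real n * \<sigma> * lam) * (7 / 10 * (l1norm p \<beta>h - l1norm p \<beta>s)) \<le> (real n * \<sigma> * lam) * (L1D / 2)"
      using C by linarith
    then have "7 / 10 * (l1norm p \<beta>h - l1norm p \<beta>s) \<le> L1D / 2"
      using np sp lp by (simp add: mult_le_cancel_left_pos)
    then show ?thesis by simp
  qed
  define S where "S = support p \<beta>s"
  define Sc where "Sc = {..<p} - S"
  have Ssub: "S \<subseteq> {..<p}" by (auto simp: S_def support_def)
  have finS: "finite S" using Ssub finite_subset by blast
  have split: "(\<Sum>j<p. f j) = (\<Sum>j\<in>S. f j) + (\<Sum>j\<in>Sc. f j)" for f :: "nat \<Rightarrow> real"
    unfolding Sc_def using sum.subset_diff[OF Ssub, of f] by simp
  have zero: "j \<in> Sc \<Longrightarrow> \<beta>s j = 0" for j by (auto simp: Sc_def S_def support_def)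
  define DS where "DS = (\<Sum>j\<in>S. \<bar>D j\<bar>)"
  define DSc where "DSc = (\<Sum>j\<in>Sc. \<bar>D j\<bar>)"
  have L1Dsplit: "L1D = DS + DSc" unfolding L1D_def l1norm_def DS_def DSc_def by (rule split)
  have l1s: "l1norm p \<beta>s = (\<Sum>j\<in>S. \<bar>\<beta>s j\<bar>)"
    unfolding l1norm_def split by (simp add: zero)
  have l1h: "l1norm p \<beta>h \<ge> l1norm p \<beta>s - DS + DSc"
  proof -
    have "(\<Sum>j\<in>Sc. \<bar>\<beta>h j\<bar>) = DSc" unfolding DSc_def D_def by (intro sum.cong) (auto simp: zero)
    moreover have "(\<Sum>j\<in>S. \<bar>\<beta>h j\<bar>) \<ge> (\<Sum>j\<in>S. \<bar>\<beta>s j\<bar> - \<bar>D j\<bar>)"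
      by (intro sum_mono) (auto simp: D_def)
    moreover have "l1norm p \<beta>h = (\<Sum>j\<in>S. \<bar>\<beta>h j\<bar>) + (\<Sum>j\<in>Sc. \<bar>\<beta>h j\<bar>)"
      unfolding l1norm_def by (rule split)
    moreover have "(\<Sum>j\<in>S. \<bar>\<beta>s j\<bar> - \<bar>D j\<bar>) = l1norm p \<beta>s - DS"
      unfolding l1s DS_def by (simp add: sum_subtractf)
    ultimately show ?thesis by linarith
  qed
  have DSp: "DS \<ge> 0" by (simp add: DS_def sum_nonneg)
  have cone: "L1D \<le> 7 * DS" using cone0 l1h L1Dsplit by linarith
  have colsq: "(\<Sum>i<n. (X i j)\<^sup>2) = real n" if "j < p" for j
  proof -
    have "gram n X j j = 1" using diag that by blast
    then have "1 / real n * (\<Sum>i<n. X i j * X i j) = 1" by (simp only: gram_def)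
    then show ?thesis using np by (simp add: power2_eq_square field_simps)
  qed
  have rh: "y i - (\<Sum>k<p. X i k * \<beta>h k) = r i" for i
    unfolding res r_def XD_def D_def by simp
  have kkt: "\<bar>\<Sum>i<n. X i j * r i\<bar> \<le> sq * lam * nr" if jp: "j < p" for j
  proof -
    define g where "g = (\<Sum>i<n. X i j * r i)"
    have H: "nr \<le> sqrt (nr\<^sup>2 - 2 * \<tau> * g + \<tau>\<^sup>2 * real n) + sq * lam * \<bar>\<tau>\<bar>" for \<tau>
    proof -
      define b' where "b' = (\<lambda>k. \<beta>h k + (if k = j then \<tau> else 0))"
      have xb: "(\<Sum>k<p. X i k * b' k) = (\<Sum>k<p. X i k * \<beta>h k) + \<tau> * X i j" for i
      proof -
        have "(\<Sum>k<p. X i k * (if k = j then \<tau> else 0)) = (\<Sum>k<p. if k = j then X i j * \<tau> else 0)"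
          by (rule sum.cong) auto
        also have "\<dots> = \<tau> * X i j" using jp by simp
        finally have a: "(\<Sum>k<p. X i k * (if k = j then \<tau> else 0)) = \<tau> * X i j" .
        show ?thesis unfolding b'_def distrib_left sum.distrib a by simp
      qed
      have Q: "(\<Sum>i<n. (y i - (\<Sum>k<p. X i k * b' k))\<^sup>2) = nr\<^sup>2 - 2 * \<tau> * g + \<tau>\<^sup>2 * real n"
      proof -
        have "(\<Sum>i<n. (y i - (\<Sum>k<p. X i k * b' k))\<^sup>2) = (\<Sum>i<n. (r i)\<^sup>2 - 2 * \<tau> * (X i j * r i) + \<tau>\<^sup>2 * (X i j)\<^sup>2)"
        proof (intro sum.cong refl)
          fix i
          have e: "y i - (\<Sum>k<p. X i k * b' k) = r i - \<tau> * X i j" using xb[of i] rh[of i] by linarith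
          show "(y i - (\<Sum>k<p. X i k * b' k))\<^sup>2 = (r i)\<^sup>2 - 2 * \<tau> * (X i j * r i) + \<tau>\<^sup>2 * (X i j)\<^sup>2"
            unfolding e by (simp add: power2_eq_square algebra_simps)
        qed
        also have "\<dots> = nr\<^sup>2 - 2 * \<tau> * g + \<tau>\<^sup>2 * real n"
          by (simp add: sum.distrib sum_subtractf sum_distrib_left[symmetric] nr2 g_def colsq jp)
        finally show ?thesis .
      qed
      have l1b: "l1norm p b' \<le> l1norm p \<beta>h + \<bar>\<tau>\<bar>"
      proof -
        have "l1norm p b' \<le> (\<Sum>k<p. \<bar>\<beta>h k\<bar> + (if k = j then \<bar>\<tau>\<bar> else 0))"
          unfolding l1norm_def b'_def by (intro sum_mono) (auto intro: abs_triangle_ineq)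
        also have "\<dots> = l1norm p \<beta>h + \<bar>\<tau>\<bar>" using jp by (simp add: sum.distrib l1norm_def)
        finally show ?thesis .
      qed
      have "nr / sq + lam * l1norm p \<beta>h \<le> sqrt (nr\<^sup>2 - 2 * \<tau> * g + \<tau>\<^sup>2 * real n) / sq + lam * l1norm p b'"
        using mn objh Q unfolding is_sqrt_lasso_min_def y_def[symmetric] sqrt_lasso_obj_def sq_def
        by (metis (no_types, lifting) divide_inverse mult.commute mult_1)
      also have "\<dots> \<le> sqrt (nr\<^sup>2 - 2 * \<tau> * g + \<tau>\<^sup>2 * real n) / sq + lam * (l1norm p \<beta>h + \<bar>\<tau>\<bar>)"
        using l1b lp by simp
      finally have "nr / sq \<le> sqrt (nr\<^sup>2 - 2 * \<tau> * g + \<tau>\<^sup>2 * real n) / sq + lam * \<bar>\<tau>\<bar>"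
        by (simp add: algebra_simps)
      then have "sq * (nr / sq) \<le> sq * (sqrt (nr\<^sup>2 - 2 * \<tau> * g + \<tau>\<^sup>2 * real n) / sq + lam * \<bar>\<tau>\<bar>)"
        by (rule mult_left_mono) (use sqp in simp)
      then show ?thesis using sqp by (simp add: algebra_simps)
    qed
    have R0: "g = 0" if "nr = 0"
    proof -
      have "(\<Sum>i<n. (r i)\<^sup>2) = 0" using that nr2 by simp
      then have "\<forall>i\<in>{..<n}. (r i)\<^sup>2 = 0" by (subst (asm) sum_nonneg_eq_0_iff) auto
      then show ?thesis by (simp add: g_def)
    qed
    have Lp: "sq * lam > 0" using sqp lp by simp
    have 1: "g \<le> sq * lam * nr"
      by (rule kkt_abstract[OF nrp Lp _ R0 H]) (use np in simp)
    have 2: "- g \<le> sq * lam * nr"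
    proof (rule kkt_abstract[OF nrp Lp _])
      show "real n > 0" using np by simp
      show "nr = 0 \<Longrightarrow> - g = 0" using R0 by simp
      fix \<tau> show "nr \<le> sqrt (nr\<^sup>2 - 2 * \<tau> * - g + \<tau>\<^sup>2 * real n) + sq * lam * \<bar>\<tau>\<bar>"
        using H[of "- \<tau>"] by simp
    qed
    show ?thesis using 1 2 unfolding g_def by linarith
  qed
  define M where "M = lam * \<sigma> * (4 + \<eta>)"
  have Mp: "M > 0" using lp sp eta_pos by (simp add: M_def)
  have nrb: "nr / sq \<le> 3 * \<sigma> + \<eta> * \<sigma>"
  proof -
    have "l1norm p \<beta>h \<ge> 0" by (simp add: l1norm_def sum_nonneg)
    then have "lam * l1norm p \<beta>h \<ge> 0" using lp by simp
    moreover have "ne / sq \<le> 3 * \<sigma>" using neup sqp by (simp add: field_simps)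
    ultimately show ?thesis using basic eb by linarith
  qed
  have PD: "\<bar>\<Sum>k<p. gram n X j k * D k\<bar> \<le> M" if jp: "j < p" for j
  proof -
    have "(\<Sum>k<p. gram n X j k * D k) = 1 / real n * (\<Sum>i<n. X i j * XD i)"
      unfolding gram_def XD_def by (simp add: sum_distrib_left sum_distrib_right sum.swap[of _ "{..<p}"] mult_ac)
    also have "(\<Sum>i<n. X i j * XD i) = (\<Sum>i<n. X i j * eps i) - (\<Sum>i<n. X i j * r i)"
      unfolding r_def by (simp add: algebra_simps sum_subtractf)
    finally have e: "(\<Sum>k<p. gram n X j k * D k) = 1 / real n * ((\<Sum>i<n. X i j * eps i) - (\<Sum>i<n. X i j * r i))" .
    have "\<bar>(\<Sum>i<n. X i j * eps i) - (\<Sum>i<n. X i j * r i)\<bar> \<le> lam * real n * \<sigma> / 2 + sq * lam * nr"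
    proof -
      have g1: "\<bar>\<Sum>i<n. X i j * eps i\<bar> \<le> lam * real n * \<sigma> / 2" using G jp by blast
      show ?thesis using abs_triangle_ineq4[of "\<Sum>i<n. X i j * eps i" "\<Sum>i<n. X i j * r i"] g1 kkt[OF jp]
        by linarith
    qed
    then have "\<bar>\<Sum>k<p. gram n X j k * D k\<bar> \<le> 1 / real n * (lam * real n * \<sigma> / 2 + sq * lam * nr)"
      unfolding e abs_mult using np by (simp add: divide_right_mono)
    also have "\<dots> = lam * \<sigma> / 2 + lam * (nr / sq)"
      using np sqp sq2[symmetric] by (simp add: field_simps)
    also have "\<dots> \<le> lam * \<sigma> / 2 + lam * (3 * \<sigma> + \<eta> * \<sigma>)"
      using mult_left_mono[OF nrb, of lam] lp by linarith
    also have "\<dots> \<le> M" unfolding M_def using lp sp by (simp add: algebra_simps)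
    finally show ?thesis .
  qed
  define c where "c = 1 / (7 * \<alpha> * real s)"
  have cp: "c > 0" using alpha_gt s_ge by (simp add: c_def)
  have Dj: "\<bar>D j\<bar> \<le> M + c * L1D" if jp: "j < p" for j
  proof -
    have "(\<Sum>k<p. gram n X j k * D k) = gram n X j j * D j + (\<Sum>k\<in>{..<p} - {j}. gram n X j k * D k)"
      using jp by (simp add: sum.remove)
    also have "gram n X j j = 1" using diag jp by blast
    finally have e: "D j = (\<Sum>k<p. gram n X j k * D k) - (\<Sum>k\<in>{..<p} - {j}. gram n X j k * D k)" by simp
    have "\<bar>\<Sum>k\<in>{..<p} - {j}. gram n X j k * D k\<bar> \<le> (\<Sum>k\<in>{..<p} - {j}. \<bar>gram n X j k * D k\<bar>)"
      by (rule sum_abs)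
    also have "\<dots> \<le> (\<Sum>k\<in>{..<p} - {j}. c * \<bar>D k\<bar>)"
    proof (rule sum_mono)
      fix k assume "k \<in> {..<p} - {j}"
      then have "\<bar>gram n X j k\<bar> \<le> c" using offdiag jp unfolding c_def by auto
      then show "\<bar>gram n X j k * D k\<bar> \<le> c * \<bar>D k\<bar>" unfolding abs_mult by (rule mult_right_mono) simp
    qed
    also have "\<dots> \<le> (\<Sum>k<p. c * \<bar>D k\<bar>)"
      by (rule sum_mono2) (use cp in auto)
    also have "\<dots> = c * L1D" by (simp add: L1D_def l1norm_def sum_distrib_left)
    finally have "\<bar>\<Sum>k\<in>{..<p} - {j}. gram n X j k * D k\<bar> \<le> c * L1D" .
    then show ?thesis using PD[OF jp] e by linarith
  qed
  have DSb: "DS \<le> real s * M + L1D / (7 * \<alpha>)"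
  proof -
    have "DS \<le> (\<Sum>j\<in>S. M + c * L1D)" unfolding DS_def
      by (rule sum_mono) (use Dj Ssub in auto)
    also have "\<dots> = real (card S) * (M + c * L1D)" by simp
    also have "\<dots> \<le> real s * (M + c * L1D)"
      by (rule mult_right_mono) (use supp Mp cp L1Dp in \<open>auto simp: S_def\<close>)
    also have "\<dots> = real s * M + L1D / (7 * \<alpha>)" using s_ge alpha_gt by (simp add: c_def field_simps)
    finally show ?thesis .
  qed
  have DSb2: "DS * (\<alpha> - 1) \<le> real s * M * \<alpha>"
  proof -
    have "L1D / (7 * \<alpha>) \<le> 7 * DS / (7 * \<alpha>)" by (rule divide_right_mono[OF cone]) (use alpha_gt in simp)
    also have "7 * DS / (7 * \<alpha>) = DS / \<alpha>" by simp
    finally have "DS \<le> real s * M + DS / \<alpha>" using DSb by simp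
    then have "DS * \<alpha> \<le> (real s * M + DS / \<alpha>) * \<alpha>" by (rule mult_right_mono) (use alpha_gt in simp)
    also have "\<dots> = real s * M * \<alpha> + DS" using alpha_gt by (simp add: field_simps)
    finally have "DS * \<alpha> \<le> real s * M * \<alpha> + DS" .
    moreover have "DS * (\<alpha> - 1) = DS * \<alpha> - DS" by (simp add: algebra_simps)
    ultimately show ?thesis by linarith
  qed
  show ?thesis
  proof (intro allI impI)
    fix j assume jp: "j < p"
    have "c * L1D \<le> c * (7 * DS)" using cone cp by simp
    also have "\<dots> = DS / (\<alpha> * real s)" unfolding c_def using alpha_gt s_ge by (simp add: field_simps)
    also have "\<dots> \<le> M / (\<alpha> - 1)"
      using DSb2 alpha_gt s_ge by (simp add: field_simps)
    finally have "\<bar>D j\<bar> \<le> M + M / (\<alpha> - 1)" using Dj[OF jp] by linarith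
    also have "\<dots> \<le> 2 * (1 + 16 / (7 * (\<alpha> - 1))) * (2 + \<eta>) * lam * \<sigma>"
    proof -
      have "M + M / (\<alpha> - 1) = lam * \<sigma> * ((4 + \<eta>) * \<alpha> / (\<alpha> - 1))"
        unfolding M_def using alpha_gt by (simp add: field_simps)
      also have "(4 + \<eta>) * \<alpha> / (\<alpha> - 1) \<le> 2 * (1 + 16 / (7 * (\<alpha> - 1))) * (2 + \<eta>)"
      proof -
        have aa: "1 \<le> \<alpha> * \<alpha>" using mult_mono[of 1 \<alpha> 1 \<alpha>] alpha_gt by simp
        have h1: "\<eta> * 11 \<le> \<alpha> * (\<eta> * 11)" using mult_right_mono[of 1 \<alpha> "\<eta> * 11"] alpha_gt eta_pos by simp
        have h2: "\<eta> * 7 \<le> \<alpha> * (\<alpha> * (\<eta> * 7))" using mult_right_mono[OF aa, of "\<eta> * 7"] eta_pos by (simp add: mult_ac)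
        have L: "(4 + \<eta>) * \<alpha> / (\<alpha> - 1) = (7 * (4 + \<eta>) * \<alpha>) / (7 * (\<alpha> - 1))"
          by (simp only: mult.assoc mult_divide_mult_cancel_left_if) simp
        have R: "2 * (1 + 16 / (7 * (\<alpha> - 1))) * (2 + \<eta>) = (14 * (\<alpha> - 1) * (2 + \<eta>) + 32 * (2 + \<eta>)) / (7 * (\<alpha> - 1))"
          using alpha_gt by (simp add: field_simps)
        have h: "0 \<le> \<alpha> * \<eta>" using alpha_gt eta_pos by simp
        have num: "7 * (4 + \<eta>) * \<alpha> \<le> 14 * (\<alpha> - 1) * (2 + \<eta>) + 32 * (2 + \<eta>)"
          using h eta_pos by (simp add: algebra_simps)
        show ?thesis unfolding L R by (rule divide_right_mono[OF num]) (use alpha_gt in simp)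
      qed
      then have "lam * \<sigma> * ((4 + \<eta>) * \<alpha> / (\<alpha> - 1)) \<le> lam * \<sigma> * (2 * (1 + 16 / (7 * (\<alpha> - 1))) * (2 + \<eta>))"
        by (rule mult_left_mono) (use lp sp in simp)
      finally show ?thesis by (simp add: mult_ac)
    qed
    finally show "\<bar>\<beta>h j - \<beta>s j\<bar> \<le> 2 * (1 + 16 / (7 * (\<alpha> - 1))) * (2 + \<eta>) * lam * \<sigma>"
      by (simp add: D_def)
  qed
qed


lemma exp_le_inv: fixes y :: real assumes "y < 1" shows "exp y \<le> 1 / (1 - y)"
proof -
  have "1 - y \<le> exp (- y)" using exp_ge_add_one_self[of "-y"] by simp
  then have "(1 - y) * exp y \<le> exp (-y) * exp y" by (rule mult_right_mono) simp
  then have "(1 - y) * exp y \<le> 1" by (simp add: exp_minus)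
  then show ?thesis using assms by (simp add: field_simps)
qed

lemma num_low: "exp (49 / 100 * real n / 2) * (1 / sqrt 2) ^ n \<le> exp (- real n / 24)"
proof -
  have "exp (43 / 150 :: real) \<le> 1 / (1 - 43 / 150)" by (rule exp_le_inv) simp
  also have "\<dots> = 150 / 107" by simp
  also have "(150 / 107 :: real) \<le> sqrt 2" by (rule real_le_rsqrt) (simp add: power2_eq_square)
  finally have "exp (43 / 150 :: real) \<le> sqrt 2" .
  then have "exp (43 / 150 :: real) / sqrt 2 \<le> 1" by simp
  then have "exp (43 / 150 :: real) / sqrt 2 * exp (- 1 / 24) \<le> 1 * exp (- 1 / 24)"
    by (rule mult_right_mono) simp
  moreover have "exp (49 / 200 :: real) * (1 / sqrt 2) = exp (43 / 150 :: real) / sqrt 2 * exp (- 1 / 24)"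
    by (simp add: exp_add[symmetric])
  ultimately have b: "exp (49 / 200 :: real) * (1 / sqrt 2) \<le> exp (- 1 / 24)" by simp
  have e1: "exp (49 / 100 * real n / 2) = exp (49 / 200) ^ n"
  proof -
    have "49 / 100 * real n / 2 = real n * (49 / 200)" by simp
    then show ?thesis by (simp only: exp_of_nat_mult)
  qed
  have "exp (49 / 100 * real n / 2) * (1 / sqrt 2) ^ n = (exp (49 / 200) * (1 / sqrt 2)) ^ n"
    unfolding e1 power_mult_distrib ..
  also have "\<dots> \<le> (exp (- 1 / 24)) ^ n" by (rule power_mono[OF b]) simp
  also have "\<dots> = exp (- real n / 24)" by (simp add: exp_of_nat_mult[symmetric])
  finally show ?thesis .
qed

lemma num_p:
  fixes a :: real assumes p2: "p \<ge> 2" and a: "a \<ge> 1"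
  shows "2 * real p * real p powr (- (2 * a)) \<le> real p powr (1 - a)"
proof -
  define q where "q = real p powr a"
  have "q \<ge> real p powr 1" unfolding q_def by (rule powr_mono) (use a p2 in auto)
  then have q2: "q \<ge> 2" using p2 by simp
  have e1: "real p powr (- (2 * a)) = 1 / (q * q)" unfolding q_def
    by (simp add: powr_minus powr_add[symmetric] field_simps)
  have e2: "real p powr (1 - a) = real p * (1 / q)" unfolding q_def using p2
    by (simp add: powr_diff field_simps)
  have "2 / (q * q) \<le> 1 / q" using q2 by (simp add: field_simps)
  then have "real p * (2 / (q * q)) \<le> real p * (1 / q)" by (rule mult_left_mono) simp
  then show ?thesis unfolding e1 e2 by (simp add: mult.commute)
qed

lemma num_up: "exp (- 5 * real n / 4) * (sqrt 2) ^ n \<le> exp (- real n / 24)"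
proof -
  have "sqrt 2 \<le> (2::real)" by (rule real_le_lsqrt) auto
  also have "(2::real) \<le> 1 + 29 / 24 " by simp
  also have "\<dots> \<le> exp (29 / 24)" by (rule exp_ge_add_one_self)
  finally have "sqrt 2 \<le> exp (29 / 24 :: real)" .
  then have "sqrt 2 / exp (29 / 24 :: real) \<le> 1" by simp
  then have "sqrt 2 / exp (29 / 24 :: real) * exp (- 1 / 24) \<le> 1 * exp (- 1 / 24)"
    by (rule mult_right_mono) simp
  moreover have "exp (- 5 / 4 :: real) * sqrt 2 = sqrt 2 / exp (29 / 24 :: real) * exp (- 1 / 24)"
    by (simp add: exp_add[symmetric] exp_minus field_simps)
  ultimately have b: "exp (- 5 / 4 :: real) * sqrt 2 \<le> exp (- 1 / 24)" by simp
  have "exp (- 5 * real n / 4) * (sqrt 2) ^ n = (exp (- 5 / 4) * sqrt 2) ^ n"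
    by (simp add: power_mult_distrib exp_of_nat_mult[symmetric] mult_ac)
  also have "\<dots> \<le> (exp (- 1 / 24)) ^ n" by (rule power_mono[OF b]) simp
  also have "\<dots> = exp (- real n / 24)" by (simp add: exp_of_nat_mult[symmetric])
  finally show ?thesis .
qed



theorem proposition4:
  fixes n p s :: nat and X :: "nat \<Rightarrow> nat \<Rightarrow> real" and \<beta>s :: "nat \<Rightarrow> real"
    and \<sigma> \<alpha> A \<eta> :: real
  assumes sigma_pos: "\<sigma> > 0"
    and diag: "\<forall>j<p. gram n X j j = 1"
    and offdiag: "\<forall>j<p. \<forall>k<p. k \<noteq> j \<longrightarrow> \<bar>gram n X j k\<bar> \<le> 1 / (7 * \<alpha> * real s)"
    and s_ge: "s \<ge> 1" and supp: "card (support p \<beta>s) \<le> s" and alpha_gt: "\<alpha> > 1"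
    and A_pos: "A > 0"
    and eta_pos: "\<eta> > 0"
    and eta_bound: "A * sqrt (2 * ln (real p) / real n) * l1norm p \<beta>s \<le> \<eta> * \<sigma>"
  shows "\<exists>E \<in> sets (noise_measure n \<sigma>).
           measure (noise_measure n \<sigma>) E
             \<ge> 1 - real p powr (1 - A\<^sup>2 / 8) - (1 + exp 2) * exp (- real n / 24)
         \<and> (\<forall>eps \<in> E. \<forall>\<beta>h.
              is_sqrt_lasso_min n p X (response n p X \<beta>s eps) (A * sqrt (2 * ln (real p) / real n)) \<beta>h \<longrightarrow>
                (let lam = A * sqrt (2 * ln (real p) / real n);
                     C = 2 * (1 + 16 / (7 * (\<alpha> - 1)));
                     t = C * (2 + \<eta>) * lam * \<sigma>
                 in linfnorm p (\<lambda>j. \<beta>h j - \<beta>s j) \<le> t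
                    \<and> ((\<forall>j \<in> support p \<beta>s. \<bar>\<beta>s j\<bar> > 2 * t) \<longrightarrow>
                         {j. j < p \<and> \<bar>\<beta>h j\<bar> > t} = support p \<beta>s)))"
  proof -
  let ?M = "noise_measure n \<sigma>"
  interpret P: prob_space ?M by (rule noise_prob_space[OF sigma_pos])
  define B where "B = 1 - real p powr (1 - A\<^sup>2 / 8) - (1 + exp 2) * exp (- real n / 24)"
  define lam where "lam = A * sqrt (2 * ln (real p) / real n)"
  define C where "C = 2 * (1 + 16 / (7 * (\<alpha> - 1)))"
  define t where "t = C * (2 + \<eta>) * lam * \<sigma>"
  have Cp: "C > 0" using alpha_gt by (simp add: C_def add_pos_pos)
  show ?thesis
  proof (cases "B \<le> 0")
    case True
    show ?thesis
      by (rule bexI[of _ "{}"]) (use True in \<open>auto simp: B_def\<close>)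
  next
    case Bpos: False
    have np: "n > 0"
    proof (rule ccontr)
      assume "\<not> n > 0"
      then have "n = 0" by simp
      then have "B = 0 - (real p powr (1 - A\<^sup>2 / 8)) - exp 2" by (simp add: B_def)
      moreover have "real p powr (1 - A\<^sup>2 / 8) \<ge> 0" by simp
      ultimately have "B \<le> 0" by (smt (verit) exp_gt_zero)
      then show False using Bpos by simp
    qed
    show ?thesis
    proof (cases "p = 0")
      case True
      have lam0: "lam = 0" by (simp add: lam_def True)
      show ?thesis
      proof (rule bexI[of _ "space ?M"], intro conjI ballI allI impI)
        show "1 - real p powr (1 - A\<^sup>2 / 8) - (1 + exp 2) * exp (- real n / 24) \<le> measure ?M (space ?M)"
          using True by (simp add: P.prob_space)
        fix eps \<beta>h
        show "let lam = A * sqrt (2 * ln (real p) / real n); C = 2 * (1 + 16 / (7 * (\<alpha> - 1)));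
            t = C * (2 + \<eta>) * lam * \<sigma>
        in linfnorm p (\<lambda>j. \<beta>h j - \<beta>s j) \<le> t \<and>
           ((\<forall>j\<in>support p \<beta>s. 2 * t < \<bar>\<beta>s j\<bar>) \<longrightarrow> {j. j < p \<and> t < \<bar>\<beta>h j\<bar>} = support p \<beta>s)"
          using True by (simp add: Let_def linfnorm_def support_def)
      qed simp
    next
      case pnz: False
      have p2: "p \<ge> 2"
      proof (rule ccontr)
        assume "\<not> p \<ge> 2"
        then have "p = 1" using pnz by simp
        then have "B \<le> 0" by (simp add: B_def)
        then show False using Bpos by simp
      qed
      have A8: "A\<^sup>2 / 8 \<ge> 1"
      proof (rule ccontr)
        assume "\<not> A\<^sup>2 / 8 \<ge> 1"
        then have "1 - A\<^sup>2 / 8 \<ge> 0" by simp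
        then have "real p powr (1 - A\<^sup>2 / 8) \<ge> 1" using p2 by (simp add: ge_one_powr_ge_zero)
        then have "B \<le> 0" unfolding B_def by (smt (verit) exp_gt_zero mult_pos_pos)
        then show False using Bpos by simp
      qed
      have lnp: "ln (real p) > 0" using p2 by simp
      have lp: "lam > 0" unfolding lam_def using A_pos lnp np by simp
      have lam2: "lam\<^sup>2 = A\<^sup>2 * (2 * ln (real p) / real n)"
        unfolding lam_def using lnp np by (simp add: power_mult_distrib)
      have tp: "t \<ge> 0" unfolding t_def using Cp eta_pos lp sigma_pos by simp
      define x where "x = lam * real n * \<sigma> / 2"
      have xp: "x > 0" unfolding x_def using lp np sigma_pos by simp
      have colsq: "(\<Sum>i<n. (X i j)\<^sup>2) = real n" if "j < p" for j
      proof -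
        have "gram n X j j = 1" using diag that by blast
        then have "1 / real n * (\<Sum>i<n. X i j * X i j) = 1" by (simp only: gram_def)
        then show ?thesis using np by (simp add: power2_eq_square field_simps)
      qed
      have colsq': "(\<Sum>i<n. (- X i j)\<^sup>2) = real n" if "j < p" for j using colsq[OF that] by simp
      define E where "E = {e \<in> space ?M. (\<forall>j<p. \<bar>\<Sum>i<n. X i j * e i\<bar> < x)
          \<and> 49 / 100 * real n * \<sigma>\<^sup>2 < (\<Sum>i<n. (e i)\<^sup>2) \<and> (\<Sum>i<n. (e i)\<^sup>2) < 5 * real n * \<sigma>\<^sup>2}"
      define U where "U = (\<lambda>j. {e \<in> space ?M. x \<le> (\<Sum>i<n. X i j * e i)})"
      define V where "V = (\<lambda>j. {e \<in> space ?M. x \<le> (\<Sum>i<n. (- X i j) * e i)})"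
      define Lo where "Lo = {e \<in> space ?M. (\<Sum>i<n. (e i)\<^sup>2) \<le> 49 / 100 * real n * \<sigma>\<^sup>2}"
      define Up where "Up = {e \<in> space ?M. 5 * real n * \<sigma>\<^sup>2 \<le> (\<Sum>i<n. (e i)\<^sup>2)}"
      have Emeas: "E \<in> sets ?M" unfolding E_def noise_measure_def by measurable
      have Umeas: "U j \<in> sets ?M" for j unfolding U_def noise_measure_def by measurable
      have Vmeas: "V j \<in> sets ?M" for j unfolding V_def noise_measure_def by measurable
      have Lomeas: "Lo \<in> sets ?M" unfolding Lo_def noise_measure_def by measurable
      have Upmeas: "Up \<in> sets ?M" unfolding Up_def noise_measure_def by measurable
      have sub: "space ?M - E \<subseteq> (\<Union>j\<in>{..<p}. U j \<union> V j) \<union> Lo \<union> Up"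
      proof
        fix e assume e: "e \<in> space ?M - E"
        show "e \<in> (\<Union>j\<in>{..<p}. U j \<union> V j) \<union> Lo \<union> Up"
        proof (cases "\<forall>j<p. \<bar>\<Sum>i<n. X i j * e i\<bar> < x")
          case True
          then show ?thesis using e unfolding E_def Lo_def Up_def by auto
        next
          case False
          then obtain j where j: "j < p" "\<bar>\<Sum>i<n. X i j * e i\<bar> \<ge> x" by auto
          then have "x \<le> (\<Sum>i<n. X i j * e i) \<or> x \<le> (\<Sum>i<n. (- X i j) * e i)"
            by (auto simp: sum_negf abs_if split: if_splits)
          then show ?thesis using e j unfolding U_def V_def by auto
        qed
      qed
      have ex: "exp (- x\<^sup>2 / (2 * real n * \<sigma>\<^sup>2)) = real p powr (- (2 * (A\<^sup>2 / 8)))"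
      proof -
        have "x\<^sup>2 / (2 * real n * \<sigma>\<^sup>2) = lam\<^sup>2 * real n / 8"
          unfolding x_def using np sigma_pos by (simp add: power2_eq_square field_simps)
        also have "\<dots> = A\<^sup>2 / 4 * ln (real p)" unfolding lam2 using np by (simp add: field_simps)
        finally show ?thesis using p2 by (simp add: powr_def)
      qed
      have mU: "measure ?M (U j) \<le> real p powr (- (2 * (A\<^sup>2 / 8)))" if "j < p" for j
        unfolding U_def ex[symmetric] by (rule tail_lin[OF sigma_pos np colsq[OF that] xp])
      have mV: "measure ?M (V j) \<le> real p powr (- (2 * (A\<^sup>2 / 8)))" if "j < p" for j
        unfolding V_def ex[symmetric] by (rule tail_lin[OF sigma_pos np colsq'[OF that] xp])
      have mUV: "measure ?M (\<Union>j\<in>{..<p}. U j \<union> V j) \<le> real p powr (1 - A\<^sup>2 / 8)"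
      proof -
        have "measure ?M (\<Union>j\<in>{..<p}. U j \<union> V j) \<le> (\<Sum>j<p. measure ?M (U j \<union> V j))"
          by (rule P.finite_measure_subadditive_finite) (auto intro: Umeas Vmeas)
        also have "\<dots> \<le> (\<Sum>j<p. 2 * real p powr (- (2 * (A\<^sup>2 / 8))))"
        proof (rule sum_mono)
          fix j assume "j \<in> {..<p}"
          then show "measure ?M (U j \<union> V j) \<le> 2 * real p powr (- (2 * (A\<^sup>2 / 8)))"
            using measure_Un_le[OF Umeas Vmeas, of j j] mU[of j] mV[of j] by simp
        qed
        also have "\<dots> = 2 * real p * real p powr (- (2 * (A\<^sup>2 / 8)))" by simp
        also have "\<dots> \<le> real p powr (1 - A\<^sup>2 / 8)" by (rule num_p[OF p2 A8])
        finally show ?thesis .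
      qed
      have mLo: "measure ?M Lo \<le> exp (- real n / 24)"
        unfolding Lo_def using tail_low[OF sigma_pos, of n "49 / 100"] num_low[of n] by simp
      have mUp: "measure ?M Up \<le> exp (- real n / 24)"
        unfolding Up_def using tail_up[OF sigma_pos, where b=5 and n=n] num_up[of n] by simp
      have "measure ?M (space ?M - E) \<le> measure ?M ((\<Union>j\<in>{..<p}. U j \<union> V j) \<union> Lo \<union> Up)"
        by (rule P.finite_measure_mono[OF sub]) (auto intro!: Umeas Vmeas Lomeas Upmeas)
      also have "\<dots> \<le> measure ?M ((\<Union>j\<in>{..<p}. U j \<union> V j) \<union> Lo) + measure ?M Up"
        by (rule measure_Un_le) (auto intro!: Umeas Vmeas Lomeas Upmeas)
      also have "\<dots> \<le> measure ?M (\<Union>j\<in>{..<p}. U j \<union> V j) + measure ?M Lo + measure ?M Up"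
        using measure_Un_le[of "\<Union>j\<in>{..<p}. U j \<union> V j" ?M Lo] Umeas Vmeas Lomeas by auto
      also have "\<dots> \<le> real p powr (1 - A\<^sup>2 / 8) + 2 * exp (- real n / 24)"
        using mUV mLo mUp by simp
      finally have mc: "measure ?M (space ?M - E) \<le> real p powr (1 - A\<^sup>2 / 8) + 2 * exp (- real n / 24)" .
      have mE: "measure ?M E \<ge> B"
      proof -
        have "measure ?M E = 1 - measure ?M (space ?M - E)" using P.prob_compl[OF Emeas] by simp
        moreover have "2 * exp (- real n / 24) \<le> (1 + exp 2) * exp (- real n / 24)"
          by (rule mult_right_mono) (auto simp: add_increasing)
        ultimately show ?thesis using mc unfolding B_def by linarith
      qed
      show ?thesis
      proof (rule bexI[OF _ Emeas], intro conjI ballI allI impI)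
        show "1 - real p powr (1 - A\<^sup>2 / 8) - (1 + exp 2) * exp (- real n / 24) \<le> measure ?M E"
          using mE by (simp add: B_def)
        fix eps \<beta>h
        assume eE: "eps \<in> E"
          and mn: "is_sqrt_lasso_min n p X (response n p X \<beta>s eps) (A * sqrt (2 * ln (real p) / real n)) \<beta>h"
        have bnd: "\<forall>j<p. \<bar>\<beta>h j - \<beta>s j\<bar> \<le> 2 * (1 + 16 / (7 * (\<alpha> - 1))) * (2 + \<eta>) * lam * \<sigma>"
        proof (rule deterministic[OF np sigma_pos lp diag offdiag s_ge supp alpha_gt eta_pos])
          show "lam * l1norm p \<beta>s \<le> \<eta> * \<sigma>" using eta_bound by (simp add: lam_def)
          show "\<forall>j<p. \<bar>\<Sum>i<n. X i j * eps i\<bar> \<le> lam * real n * \<sigma> / 2"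
            using eE unfolding E_def x_def by (auto intro: less_imp_le)
          show "49 / 100 * real n * \<sigma>\<^sup>2 \<le> (\<Sum>i<n. (eps i)\<^sup>2)" using eE unfolding E_def by auto
          show "(\<Sum>i<n. (eps i)\<^sup>2) \<le> 5 * real n * \<sigma>\<^sup>2" using eE unfolding E_def by auto
          show "is_sqrt_lasso_min n p X (response n p X \<beta>s eps) lam \<beta>h" using mn by (simp add: lam_def)
        qed
        then have bnd': "\<forall>j<p. \<bar>\<beta>h j - \<beta>s j\<bar> \<le> t" by (simp add: t_def C_def)
        have L: "linfnorm p (\<lambda>j. \<beta>h j - \<beta>s j) \<le> t"
          unfolding linfnorm_def using bnd' tp by (auto simp: Max_le_iff)
        have S: "{j. j < p \<and> t < \<bar>\<beta>h j\<bar>} = support p \<beta>s" if big: "\<forall>j\<in>support p \<beta>s. 2 * t < \<bar>\<beta>s j\<bar>"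
        proof (intro set_eqI iffI)
          fix j assume "j \<in> {j. j < p \<and> t < \<bar>\<beta>h j\<bar>}"
          then have j: "j < p" "t < \<bar>\<beta>h j\<bar>" by auto
          have "\<beta>s j \<noteq> 0"
          proof
            assume "\<beta>s j = 0"
            then show False using bnd' j by auto
          qed
          then show "j \<in> support p \<beta>s" using j by (simp add: support_def)
        next
          fix j assume js: "j \<in> support p \<beta>s"
          then have j: "j < p" by (simp add: support_def)
          have "2 * t < \<bar>\<beta>s j\<bar>" using big js by blast
          moreover have "\<bar>\<beta>h j - \<beta>s j\<bar> \<le> t" using bnd' j by blast
          ultimately have "t < \<bar>\<beta>h j\<bar>" by linarith
          then show "j \<in> {j. j < p \<and> t < \<bar>\<beta>h j\<bar>}" using j by simp
        qed
        show "let lam = A * sqrt (2 * ln (real p) / real n); C = 2 * (1 + 16 / (7 * (\<alpha> - 1)));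
            t = C * (2 + \<eta>) * lam * \<sigma>
        in linfnorm p (\<lambda>j. \<beta>h j - \<beta>s j) \<le> t \<and>
           ((\<forall>j\<in>support p \<beta>s. 2 * t < \<bar>\<beta>s j\<bar>) \<longrightarrow> {j. j < p \<and> t < \<bar>\<beta>h j\<bar>} = support p \<beta>s)"
          using L S unfolding Let_def t_def C_def lam_def by blast
      qed
    qed
  qed
qed

end
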